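(* Let $\mu$ be a probability measure on $\mathbb{R}$. For $0<t<1$ and $x\in\mathbb{R}$, let $$d_{t}(x)=\frac{-\log\mu[x-t/2,x+t/2]}{|\log t|}.$$ Then $$\delta_{c}(\mu)=\limsup_{t\to0}\int d_{t}(y)\,d\mu(y).$$
   Context: For $t>0$, let $\nu_t$ be the centered Gaussian law on $\mathbb{R}$ with variance $t^2$, i.e. $\nu_t(dx)=(2\pi t^2)^{-1/2}e^{-x^2/(2t^2)}dx$, and let $\mu_t=\mu*\nu_t$. For a non-negative density $p$, $H(p(x)\,dx)=\int p(x)\log p(x)\,dx$. The classical entropy dimension of a probability measure $\mu$ on $\mathbb{R}$ is $$\delta_c(\mu)=1-\liminf_{t\to0}\frac{H(\mu_t)}{|\log t|}.$$ *)

theory Defs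
  imports "HOL-Probability.Probability" "HOL-Probability.Convolution"
begin

definition gauss_law :: "real \<Rightarrow> real measure" where
  "gauss_law t = density lborel (\<lambda>x. ennreal (normal_density 0 t x))"

definition smoothed :: "real measure \<Rightarrow> real \<Rightarrow> real measure" where
  "smoothed \<mu> t = convolution \<mu> (gauss_law t)"

definition entropy_H :: "(real \<Rightarrow> ennreal) \<Rightarrow> ereal" where
  "entropy_H p =
     enn2ereal (\<integral>\<^sup>+ x. ennreal (max 0 (enn2real (p x) * ln (enn2real (p x)))) \<partial>lborel)
   - enn2ereal (\<integral>\<^sup>+ x. ennreal (max 0 (- (enn2real (p x) * ln (enn2real (p x))))) \<partial>lborel)"

definition entropy_meas :: "real measure \<Rightarrow> ereal" where
  "entropy_meas M = entropy_H (RN_deriv lborel M)"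

definition classical_entropy_dim :: "real measure \<Rightarrow> ereal" where
  "classical_entropy_dim \<mu> =
     1 - Liminf (at_right 0) (\<lambda>t. entropy_meas (smoothed \<mu> t) / ereal \<bar>ln t\<bar>)"

definition local_dim_t :: "real measure \<Rightarrow> real \<Rightarrow> real \<Rightarrow> real" where
  "local_dim_t \<mu> t x = - ln (measure \<mu> {x - t/2 .. x + t/2}) / \<bar>ln t\<bar>"

end

theory Submission
  imports Defs "HOL-Real_Asymp.Real_Asymp"
begin

lemma limsup_close:
  fixes u v :: "real \<Rightarrow> ereal" and e :: "real \<Rightarrow> real" and F
  assumes e: "(e \<longlongrightarrow> 0) F" and F: "F \<noteq> bot"
    and ev: "eventually (\<lambda>x. u x \<le> v x + ereal (e x)) F"
  shows "Limsup F u \<le> Limsup F v"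
proof (rule ereal_le_epsilon2)
  fix \<epsilon> :: real assume "0 < \<epsilon>"
  then have "eventually (\<lambda>x. e x < \<epsilon>) F"
    using e by (simp add: order_tendstoD(2))
  with ev have "eventually (\<lambda>x. u x \<le> v x + ereal \<epsilon>) F"
  proof eventually_elim
    case (elim x)
    then have "ereal (e x) \<le> ereal \<epsilon>" by simp
    then have "v x + ereal (e x) \<le> v x + ereal \<epsilon>" by (rule add_left_mono)
    with elim show ?case by order
  qed
  then have "Limsup F u \<le> Limsup F (\<lambda>x. v x + ereal \<epsilon>)"
    by (rule Limsup_mono)
  also have "\<dots> = Limsup F v + ereal \<epsilon>"
    using F by (intro Limsup_add_ereal_right) auto
  finally show "Limsup F u \<le> Limsup F v + ereal \<epsilon>" .
qed

lemma close_pt: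
  fixes P N A :: ennreal and a :: real
  assumes a: "a > 0" and P: "P < \<infinity>" and L: "N + ennreal a \<le> A + P + 4"
    and U: "P + A \<le> N + ennreal a + 14"
  shows "1 - (enn2ereal P - enn2ereal N) / ereal a \<le> enn2ereal (A / ennreal a) + ereal (14/a)"
    and "enn2ereal (A / ennreal a) \<le> 1 - (enn2ereal P - enn2ereal N) / ereal a + ereal (14/a)"
proof -
  have "1 - (enn2ereal P - enn2ereal N) / ereal a \<le> enn2ereal (A / ennreal a) + ereal (14/a) \<and>
    enn2ereal (A / ennreal a) \<le> 1 - (enn2ereal P - enn2ereal N) / ereal a + ereal (14/a)"
  proof (cases "A = \<infinity>")
    case True
    then have "N + ennreal a + 14 = \<top>" using U P by (simp add: top_unique)
    then have "N = \<infinity>" by (simp add: ennreal_add_eq_top)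
    from P obtain Pr where Pr: "P = ennreal Pr" "Pr \<ge> 0" by (cases P) auto
    have t: "\<top> / ennreal a = \<top>" using a by (simp add: ennreal_top_divide)
    have "(ereal Pr - \<infinity>) / ereal a = - \<infinity>" using a by (simp add: divide_ereal_def)
    then show ?thesis using True a \<open>N = \<infinity>\<close>
      by (simp add: Pr t)
  next
    case False
    then obtain Ar where Ar: "A = ennreal Ar" "Ar \<ge> 0" by (cases A) auto
    from P obtain Pr where Pr: "P = ennreal Pr" "Pr \<ge> 0" by (cases P) auto
    have "N \<le> N + ennreal a" by simp
    also have "\<dots> \<le> A + P + 4" by (rule L)
    also have "\<dots> < \<top>" using Ar Pr by (simp flip: ennreal_plus del: ennreal_plus)
    finally have "N < \<infinity>" by simp
    then obtain Nr where Nr: "N = ennreal Nr" "Nr \<ge> 0" by (cases N) auto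
    have e1: "N + ennreal a = ennreal (Nr + a)" "A + P + 4 = ennreal (Ar + Pr + 4)"
      "P + A = ennreal (Pr + Ar)" "ennreal (Nr + a) + 14 = ennreal (Nr + a + 14)"
      using Ar Pr Nr a by (simp_all add: ennreal_plus[symmetric] del: ennreal_plus, simp_all add: ennreal_plus)
    have L': "Nr + a \<le> Ar + Pr + 4" using L Ar Pr Nr a unfolding e1
      by (subst (asm) ennreal_le_iff) auto
    have "ennreal (Pr + Ar) \<le> ennreal (Nr + a + 14)" using U by (simp only: e1)
    then have U': "Pr + Ar \<le> Nr + a + 14" using Ar Pr Nr a
      by (subst (asm) ennreal_le_iff) auto
    have eq: "A / ennreal a = ennreal (Ar / a)" using Ar a by (simp add: divide_ennreal)
    have "(a - Pr + Nr) / a \<le> (Ar + 14) / a"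
      by (rule divide_right_mono) (use L' a in linarith)+
    moreover have "(a - Pr + Nr) / a = 1 - (Pr - Nr) / a" "(Ar + 14) / a = Ar / a + 14 / a"
      using a by (simp_all add: field_simps)
    ultimately have r1: "1 - (Pr - Nr) / a \<le> Ar / a + 14 / a" by simp
    have "Ar / a \<le> (a - Pr + Nr + 14) / a"
      by (rule divide_right_mono) (use U' a in linarith)+
    moreover have "(a - Pr + Nr + 14) / a = 1 - (Pr - Nr) / a + 14 / a"
      using a by (simp_all add: field_simps)
    ultimately have r2: "Ar / a \<le> 1 - (Pr - Nr) / a + 14 / a" by simp
    have "enn2ereal (A / ennreal a) = ereal (Ar / a)" unfolding eq using Ar a by simp
    moreover have "1 - (enn2ereal P - enn2ereal N) / ereal a = ereal (1 - (Pr - Nr) / a)"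
      using Pr Nr a by (simp add: one_ereal_def)
    ultimately show ?thesis using r1 r2 by simp
  qed
  then show "1 - (enn2ereal P - enn2ereal N) / ereal a \<le> enn2ereal (A / ennreal a) + ereal (14/a)"
    and "enn2ereal (A / ennreal a) \<le> 1 - (enn2ereal P - enn2ereal N) / ereal a + ereal (14/a)" by auto
qed

locale ED = prob_space M for M :: "real measure" +
  assumes sets_M[measurable_cong]: "sets M = sets borel"
begin

lemma space_M[simp]: "space M = UNIV"
  using sets_eq_imp_space_eq[OF sets_M] by simp

definition pe :: "real \<Rightarrow> real \<Rightarrow> ennreal" where
  "pe t x = (\<integral>\<^sup>+ y. ennreal (normal_density 0 t (x - y)) \<partial>M)"

definition p :: "real \<Rightarrow> real \<Rightarrow> real" where
  "p t x = enn2real (pe t x)"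

definition m :: "real \<Rightarrow> real \<Rightarrow> real" where
  "m t y = measure M {y - t/2 .. y + t/2}"

lemma pe_measurable[measurable]: "pe t \<in> borel_measurable borel"
  unfolding pe_def[abs_def] by measurable

lemma p_measurable[measurable]: "p t \<in> borel_measurable borel"
  unfolding p_def[abs_def] by measurable

lemma m_measurable[measurable]: "m t \<in> borel_measurable borel"
proof -
  let ?Q = "{z\<in>space (borel \<Otimes>\<^sub>M M). fst z - t/2 \<le> snd z \<and> snd z \<le> fst z + t/2}"
  have Q: "?Q \<in> sets (borel \<Otimes>\<^sub>M M)" by measurable
  have "(\<lambda>y. emeasure M (Pair y -` ?Q)) \<in> borel_measurable borel"
    by (rule measurable_emeasure_Pair[OF Q])
  moreover have "(\<lambda>y. emeasure M (Pair y -` ?Q)) = (\<lambda>y. emeasure M {y - t/2 .. y + t/2})"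
    by (rule ext, rule arg_cong[where f="emeasure M"]) (auto simp: space_pair_measure)
  ultimately have "(\<lambda>y. emeasure M {y - t/2 .. y + t/2}) \<in> borel_measurable borel" by metis
  then have "(\<lambda>y. enn2real (emeasure M {y - t/2 .. y + t/2})) \<in> borel_measurable borel" by measurable
  then show ?thesis unfolding m_def[abs_def] measure_def .
qed

lemma tonelli:
  assumes "case_prod f \<in> borel_measurable (lborel \<Otimes>\<^sub>M M)"
  shows "(\<integral>\<^sup>+ y. \<integral>\<^sup>+ x. f x y \<partial>lborel \<partial>M) = (\<integral>\<^sup>+ x. \<integral>\<^sup>+ y. f x y \<partial>M \<partial>lborel)"
proof -
  interpret pair_sigma_finite lborel M ..
  show ?thesis by (rule Fubini'[OF assms])
qed

lemma shift_lborel: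
  fixes g :: "real \<Rightarrow> ennreal"
  assumes [measurable]: "g \<in> borel_measurable borel"
  shows "(\<integral>\<^sup>+ u. g u \<partial>lborel) = (\<integral>\<^sup>+ x. g (x - y) \<partial>lborel)"
  using nn_integral_real_affine[of g 1 "-y"] by simp

lemma gauss_prob: "0 < t \<Longrightarrow> prob_space (gauss_law t)"
  unfolding gauss_law_def by (rule prob_space_normal_density)

lemma sets_gauss[simp]: "sets (gauss_law t) = sets borel"
  unfolding gauss_law_def by simp

lemma smoothed_eq:
  assumes t: "0 < t"
  shows "smoothed M t = density lborel (pe t)"
proof (rule measure_eqI)
  show "sets (smoothed M t) = sets (density lborel (pe t))"
    by (simp add: smoothed_def)
  fix A assume "A \<in> sets (smoothed M t)"
  then have A[measurable]: "A \<in> sets borel" by (simp add: smoothed_def)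
  interpret G: prob_space "gauss_law t" by (rule gauss_prob[OF t])
  have "emeasure (smoothed M t) A = (\<integral>\<^sup>+ y. \<integral>\<^sup>+ u. indicator A (y + u) \<partial>gauss_law t \<partial>M)"
    unfolding smoothed_def
    by (rule convolution_emeasure'[OF A finite_measure_axioms G.finite_measure_axioms _ sets_M]) simp
  also have "\<dots> = (\<integral>\<^sup>+ y. \<integral>\<^sup>+ u. ennreal (normal_density 0 t u) * indicator A (y + u) \<partial>lborel \<partial>M)"
    unfolding gauss_law_def
    by (intro nn_integral_cong, subst nn_integral_density) auto
  also have "\<dots> = (\<integral>\<^sup>+ y. \<integral>\<^sup>+ x. ennreal (normal_density 0 t (x - y)) * indicator A x \<partial>lborel \<partial>M)"
  proof (rule nn_integral_cong)
    fix y assume "y \<in> space M"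
    show "(\<integral>\<^sup>+ u. ennreal (normal_density 0 t u) * indicator A (y + u) \<partial>lborel) =
      (\<integral>\<^sup>+ x. ennreal (normal_density 0 t (x - y)) * indicator A x \<partial>lborel)"
      using shift_lborel[of "\<lambda>u. ennreal (normal_density 0 t u) * indicator A (y + u)" y]
      by simp
  qed
  also have "\<dots> = (\<integral>\<^sup>+ x. \<integral>\<^sup>+ y. ennreal (normal_density 0 t (x - y)) * indicator A x \<partial>M \<partial>lborel)"
    by (rule tonelli) measurable
  also have "\<dots> = (\<integral>\<^sup>+ x. pe t x * indicator A x \<partial>lborel)"
    unfolding pe_def by (intro nn_integral_cong nn_integral_multc) measurable
  also have "\<dots> = emeasure (density lborel (pe t)) A"
    by (simp add: emeasure_density)
  finally show "emeasure (smoothed M t) A = emeasure (density lborel (pe t)) A" .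
qed

lemma phi_eq: assumes "0 < t" shows "normal_density 0 t u = exp (- u\<^sup>2 / (2 * t\<^sup>2)) / (t * sqrt (2 * pi))"
proof -
  have "sqrt (2 * pi * t\<^sup>2) = t * sqrt (2 * pi)"
    using assms by (metis real_sqrt_abs real_sqrt_mult abs_of_pos mult.commute)
  then show ?thesis unfolding normal_density_def by simp
qed

lemma phi_le: assumes "0 < t" shows "normal_density 0 t u \<le> 1 / (t * sqrt (2 * pi))"
proof -
  have "exp (- u\<^sup>2 / (2 * t\<^sup>2)) / (t * sqrt (2 * pi)) \<le> 1 / (t * sqrt (2 * pi))"
    by (rule divide_right_mono) (use assms in auto)
  then show ?thesis by (simp only: phi_eq[OF assms])
qed

lemma phi_le': assumes "0 < t" shows "normal_density 0 t u \<le> 1 / t"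
proof -
  have s: "1 \<le> sqrt (2 * pi)" using pi_gt3 by (simp add: real_sqrt_ge_one)
  have "t \<le> t * sqrt (2 * pi)" using mult_left_mono[OF s, of t] assms by simp
  then have "1 / (t * sqrt (2 * pi)) \<le> 1 / t"
    by (rule divide_left_mono) (use assms s in auto)
  then show ?thesis using phi_le[OF assms, of u] by linarith
qed

lemma phi_anti: assumes "0 < t" "\<bar>u\<bar> \<le> \<bar>v\<bar>" shows "normal_density 0 t v \<le> normal_density 0 t u"
proof -
  have "u\<^sup>2 \<le> v\<^sup>2" using assms by (simp add: abs_le_square_iff)
  then have "- v\<^sup>2 / (2 * t\<^sup>2) \<le> - u\<^sup>2 / (2 * t\<^sup>2)"
    by (intro divide_right_mono) (use assms in auto)
  then have "exp (- v\<^sup>2 / (2 * t\<^sup>2)) / (t * sqrt (2 * pi)) \<le> exp (- u\<^sup>2 / (2 * t\<^sup>2)) / (t * sqrt (2 * pi))"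
    by (intro divide_right_mono) (use assms in auto)
  then show ?thesis by (simp only: phi_eq[OF assms(1)])
qed

lemma ln_phi: assumes "0 < t"
  shows "ln (normal_density 0 t u) = - ln t - ln (sqrt (2 * pi)) - u\<^sup>2 / (2 * t\<^sup>2)"
proof -
  have s: "0 < sqrt (2 * pi)" by simp
  have "ln (exp (- u\<^sup>2 / (2 * t\<^sup>2)) / (t * sqrt (2 * pi))) =
      ln (exp (- u\<^sup>2 / (2 * t\<^sup>2))) - ln (t * sqrt (2 * pi))"
    using assms s by (simp add: ln_div)
  also have "\<dots> = - u\<^sup>2 / (2 * t\<^sup>2) - (ln t + ln (sqrt (2 * pi)))"
    using assms s by (simp add: ln_mult)
  finally show ?thesis unfolding phi_eq[OF assms] by simp
qed

lemma int_phi: "0 < t \<Longrightarrow> (\<integral>\<^sup>+ u. ennreal (normal_density 0 t u) \<partial>lborel) = 1"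
  using prob_space.emeasure_space_1[OF prob_space_normal_density, of t 0]
  by (simp add: emeasure_density)

lemma int_phi_shift: "0 < t \<Longrightarrow> (\<integral>\<^sup>+ x. ennreal (normal_density 0 t (x - y)) \<partial>lborel) = 1"
proof -
  assume t: "0 < t"
  have "(\<integral>\<^sup>+ u. ennreal (normal_density 0 t u) \<partial>lborel) = (\<integral>\<^sup>+ x. ennreal (normal_density 0 t (x - y)) \<partial>lborel)"
    by (rule shift_lborel) measurable
  with int_phi[OF t] show ?thesis by simp
qed

lemma pe_le: assumes "0 < t" shows "pe t x \<le> ennreal (1 / t)"
proof -
  have "pe t x \<le> (\<integral>\<^sup>+ y. ennreal (1 / t) \<partial>M)"
    unfolding pe_def by (intro nn_integral_mono ennreal_leI) (simp add: phi_le'[OF assms])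
  also have "\<dots> = ennreal (1 / t)" using emeasure_space_1 by simp
  finally show ?thesis .
qed

lemma pe_pos: assumes "0 < t" shows "0 < pe t x"
proof -
  have "pe t x \<noteq> 0"
  proof
    assume "pe t x = 0"
    then have "AE y in M. ennreal (normal_density 0 t (x - y)) = 0"
      unfolding pe_def by (subst (asm) nn_integral_0_iff_AE) auto
    then have "AE y in M. False"
      by eventually_elim (metis ennreal_eq_0_iff not_le normal_density_pos[OF assms])
    then show False by simp
  qed
  then show ?thesis using not_gr_zero by blast
qed

lemma pe_eq: assumes "0 < t" shows "pe t x = ennreal (p t x)"
  using pe_le[OF assms, of x] unfolding p_def
  by (cases "pe t x") (auto simp: top_unique)

lemma p_pos: assumes "0 < t" shows "0 < p t x"
proof -
  have "0 < ennreal (p t x)" using pe_pos[OF assms, of x] pe_eq[OF assms, of x] by simp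
  then show ?thesis by simp
qed

lemma p_le: assumes "0 < t" shows "p t x \<le> 1 / t"
proof -
  have "ennreal (p t x) \<le> ennreal (1 / t)" using pe_le[OF assms, of x] pe_eq[OF assms, of x] by simp
  then show ?thesis using assms by (simp add: ennreal_le_iff)
qed

lemma int_pe: assumes "0 < t" shows "(\<integral>\<^sup>+ x. pe t x \<partial>lborel) = 1"
proof -
  interpret G: prob_space "gauss_law t" by (rule gauss_prob[OF assms])
  have "(\<integral>\<^sup>+ x. pe t x \<partial>lborel) = emeasure (density lborel (pe t)) UNIV"
    by (simp add: emeasure_density)
  also have "\<dots> = emeasure (smoothed M t) UNIV" by (simp add: smoothed_eq[OF assms])
  also have "\<dots> = (\<integral>\<^sup>+ y. \<integral>\<^sup>+ u. indicator UNIV (y + u) \<partial>gauss_law t \<partial>M)"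
    unfolding smoothed_def
    by (rule convolution_emeasure'[OF _ finite_measure_axioms G.finite_measure_axioms _ sets_M]) simp_all
  also have "\<dots> = 1" using G.emeasure_space_1 emeasure_space_1 by simp
  finally show ?thesis .
qed

definition PP :: "real \<Rightarrow> ennreal" where
  "PP t = (\<integral>\<^sup>+ x. ennreal (max 0 (p t x * ln (p t x))) \<partial>lborel)"

definition NN :: "real \<Rightarrow> ennreal" where
  "NN t = (\<integral>\<^sup>+ x. ennreal (max 0 (- (p t x * ln (p t x)))) \<partial>lborel)"

lemma entropy_eq: assumes t: "0 < t"
  shows "entropy_meas (smoothed M t) = enn2ereal (PP t) - enn2ereal (NN t)"
proof -
  have "AE x in lborel. pe t x = RN_deriv lborel (density lborel (pe t)) x"
  proof (rule sigma_finite_measure.RN_deriv_unique[OF _ _ refl])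
    show "pe t \<in> borel_measurable lborel" by measurable
  qed unfold_locales
  then have ae: "AE x in lborel. enn2real (RN_deriv lborel (smoothed M t) x) = p t x"
    by eventually_elim (simp add: smoothed_eq[OF t] p_def)
  have 1: "(\<integral>\<^sup>+ x. ennreal (max 0 (enn2real (RN_deriv lborel (smoothed M t) x) * ln (enn2real (RN_deriv lborel (smoothed M t) x)))) \<partial>lborel) = PP t"
    unfolding PP_def by (rule nn_integral_cong_AE) (use ae in eventually_elim, simp)
  have 2: "(\<integral>\<^sup>+ x. ennreal (max 0 (- (enn2real (RN_deriv lborel (smoothed M t) x) * ln (enn2real (RN_deriv lborel (smoothed M t) x))))) \<partial>lborel) = NN t"
    unfolding NN_def by (rule nn_integral_cong_AE) (use ae in eventually_elim, simp)
  show ?thesis unfolding entropy_meas_def entropy_H_def 1 2 ..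
qed

definition J :: "real \<Rightarrow> (real \<Rightarrow> real \<Rightarrow> ennreal) \<Rightarrow> ennreal" where
  "J t f = (\<integral>\<^sup>+ y. \<integral>\<^sup>+ x. ennreal (normal_density 0 t (x - y)) * f x y \<partial>lborel \<partial>M)"

lemma J_x:
  assumes t: "0 < t" and [measurable]: "g \<in> borel_measurable borel"
  shows "J t (\<lambda>x y. g x) = (\<integral>\<^sup>+ x. pe t x * g x \<partial>lborel)"
proof -
  have "J t (\<lambda>x y. g x) = (\<integral>\<^sup>+ x. \<integral>\<^sup>+ y. ennreal (normal_density 0 t (x - y)) * g x \<partial>M \<partial>lborel)"
    unfolding J_def by (rule tonelli) measurable
  also have "\<dots> = (\<integral>\<^sup>+ x. pe t x * g x \<partial>lborel)"
    unfolding pe_def by (intro nn_integral_cong nn_integral_multc) measurable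
  finally show ?thesis .
qed

lemma J_y:
  assumes t: "0 < t"
  shows "J t (\<lambda>x y. h y) = (\<integral>\<^sup>+ y. h y \<partial>M)"
  unfolding J_def
proof (rule nn_integral_cong)
  fix y assume "y \<in> space M"
  have "(\<integral>\<^sup>+ x. ennreal (normal_density 0 t (x - y)) * h y \<partial>lborel) =
      (\<integral>\<^sup>+ x. ennreal (normal_density 0 t (x - y)) \<partial>lborel) * h y"
    by (rule nn_integral_multc) measurable
  then show "(\<integral>\<^sup>+ x. ennreal (normal_density 0 t (x - y)) * h y \<partial>lborel) = h y"
    using int_phi_shift[OF t, of y] by simp
qed

lemma J_diff:
  assumes t: "0 < t" and [measurable]: "k \<in> borel_measurable borel"
  shows "J t (\<lambda>x y. k (x - y)) = (\<integral>\<^sup>+ u. ennreal (normal_density 0 t u) * k u \<partial>lborel)"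
proof -
  have "J t (\<lambda>x y. k (x - y)) = (\<integral>\<^sup>+ y. (\<integral>\<^sup>+ u. ennreal (normal_density 0 t u) * k u \<partial>lborel) \<partial>M)"
    unfolding J_def
  proof (rule nn_integral_cong)
    fix y assume "y \<in> space M"
    show "(\<integral>\<^sup>+ x. ennreal (normal_density 0 t (x - y)) * k (x - y) \<partial>lborel) =
      (\<integral>\<^sup>+ u. ennreal (normal_density 0 t u) * k u \<partial>lborel)"
      by (rule shift_lborel[symmetric]) measurable
  qed
  also have "\<dots> = (\<integral>\<^sup>+ u. ennreal (normal_density 0 t u) * k u \<partial>lborel)"
    using emeasure_space_1 by simp
  finally show ?thesis .
qed

lemma J_add:
  assumes [measurable]: "case_prod f \<in> borel_measurable (borel \<Otimes>\<^sub>M borel)"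
    "case_prod g \<in> borel_measurable (borel \<Otimes>\<^sub>M borel)"
  shows "J t (\<lambda>x y. f x y + g x y) = J t f + J t g"
  unfolding J_def
proof -
  have "(\<integral>\<^sup>+ y. \<integral>\<^sup>+ x. ennreal (normal_density 0 t (x - y)) * (f x y + g x y) \<partial>lborel \<partial>M) =
    (\<integral>\<^sup>+ y. (\<integral>\<^sup>+ x. ennreal (normal_density 0 t (x - y)) * f x y \<partial>lborel) +
       (\<integral>\<^sup>+ x. ennreal (normal_density 0 t (x - y)) * g x y \<partial>lborel) \<partial>M)"
    by (intro nn_integral_cong, simp add: distrib_left, rule nn_integral_add) measurable
  also have "\<dots> = (\<integral>\<^sup>+ y. \<integral>\<^sup>+ x. ennreal (normal_density 0 t (x - y)) * f x y \<partial>lborel \<partial>M) +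
     (\<integral>\<^sup>+ y. \<integral>\<^sup>+ x. ennreal (normal_density 0 t (x - y)) * g x y \<partial>lborel \<partial>M)"
    by (rule nn_integral_add) measurable
  finally show "(\<integral>\<^sup>+ y. \<integral>\<^sup>+ x. ennreal (normal_density 0 t (x - y)) * (f x y + g x y) \<partial>lborel \<partial>M) =
    (\<integral>\<^sup>+ y. \<integral>\<^sup>+ x. ennreal (normal_density 0 t (x - y)) * f x y \<partial>lborel \<partial>M) +
     (\<integral>\<^sup>+ y. \<integral>\<^sup>+ x. ennreal (normal_density 0 t (x - y)) * g x y \<partial>lborel \<partial>M)" .
qed

lemma J_mono:
  assumes "AE y in M. \<forall>x. f x y \<le> g x y"
  shows "J t f \<le> J t g"
  unfolding J_def
  by (rule nn_integral_mono_AE) (use assms in \<open>eventually_elim, auto intro!: nn_integral_mono mult_left_mono\<close>)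

lemma J_const: "0 < t \<Longrightarrow> J t (\<lambda>x y. c) = c"
  using J_y[of t "\<lambda>y. c"] emeasure_space_1 by simp

lemma moment2: assumes t: "0 < t"
  shows "(\<integral>\<^sup>+ u. ennreal (normal_density 0 t u) * ennreal ((u / t)\<^sup>2) \<partial>lborel) = 1"
proof -
  have hb: "has_bochner_integral lborel (\<lambda>x. normal_density 0 t x * (x - 0) ^ (2 * 1)) (fact (2 * 1) / ((2 / t\<^sup>2) ^ 1 * fact 1))"
    by (rule normal_moment_even[OF t])
  have v: "fact (2 * 1) / ((2 / t\<^sup>2) ^ 1 * fact 1) = (t\<^sup>2 :: real)" using t by simp
  have hb2: "has_bochner_integral lborel (\<lambda>x. normal_density 0 t x * (x / t)\<^sup>2) 1"
  proof -
    have "has_bochner_integral lborel (\<lambda>x. normal_density 0 t x * x\<^sup>2 * (1 / t\<^sup>2)) (t\<^sup>2 * (1 / t\<^sup>2))"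
      using has_bochner_integral_mult_left[OF hb[unfolded v], of "1/t\<^sup>2"]
      by (simp add: power2_eq_square mult.commute)
    moreover have "(\<lambda>x. normal_density 0 t x * x\<^sup>2 * (1 / t\<^sup>2)) = (\<lambda>x. normal_density 0 t x * (x / t)\<^sup>2)"
      by (simp add: power_divide)
    ultimately show ?thesis using t by simp
  qed
  have "(\<integral>\<^sup>+ u. ennreal (normal_density 0 t u * (u / t)\<^sup>2) \<partial>lborel) = ennreal 1"
    using nn_integral_eq_integral[OF integrable.intros[OF hb2]] has_bochner_integral_integral_eq[OF hb2]
    by simp
  then show ?thesis by (simp add: ennreal_mult'')
qed

lemma m_nonneg: "0 \<le> m t y" by (simp add: m_def)
lemma m_le1: "m t y \<le> 1" by (simp add: m_def)

lemma AE_m_pos: assumes t: "0 < t" shows "AE y in M. 0 < m t y"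
proof (rule AE_I')
  let ?S = "\<lambda>q::real. {q - t/4 .. q + t/4}"
  let ?I = "{q \<in> \<rat>. emeasure M (?S q) = 0}"
  show "(\<Union>q\<in>?I. ?S q) \<in> null_sets M"
  proof (rule null_sets_UN')
    show "countable ?I" by (rule countable_subset[OF _ countable_rat]) auto
    fix q assume "q \<in> ?I"
    then show "?S q \<in> null_sets M" by (auto simp: null_sets_def sets_M)
  qed
  show "{y \<in> space M. \<not> 0 < m t y} \<subseteq> (\<Union>q\<in>?I. ?S q)"
  proof safe
    fix y assume "\<not> 0 < m t y"
    then have "m t y = 0" using m_nonneg[of t y] by linarith
    then have e0: "emeasure M {y - t/2 .. y + t/2} = 0"
      unfolding m_def by (simp add: emeasure_eq_measure sets_M)
    obtain q where q: "q \<in> \<rat>" "y - t/4 < q" "q < y" using Rats_dense_in_real[of "y - t/4" y] t by auto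
    have sub: "?S q \<subseteq> {y - t/2 .. y + t/2}" using q t by auto
    have "emeasure M (?S q) \<le> emeasure M {y - t/2 .. y + t/2}"
      by (rule emeasure_mono[OF sub]) (simp add: sets_M)
    then have "emeasure M (?S q) = 0" using e0 by simp
    moreover have "y \<in> ?S q" using q t by auto
    ultimately show "y \<in> (\<Union>q\<in>?I. ?S q)" using q by auto
  qed
qed

lemma pe_lower: assumes t: "0 < t"
  shows "m t y * normal_density 0 t (\<bar>x - y\<bar> + t/2) \<le> p t x"
proof -
  let ?c = "normal_density 0 t (\<bar>x - y\<bar> + t/2)"
  have "(\<integral>\<^sup>+ y'. ennreal ?c * indicator {y - t/2 .. y + t/2} y' \<partial>M) \<le> pe t x"
    unfolding pe_def
  proof (rule nn_integral_mono)
    fix y' assume "y' \<in> space M"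
    show "ennreal ?c * indicator {y - t/2 .. y + t/2} y' \<le> ennreal (normal_density 0 t (x - y'))"
    proof (cases "y' \<in> {y - t/2 .. y + t/2}")
      case True
      then have "\<bar>x - y'\<bar> \<le> \<bar>\<bar>x - y\<bar> + t/2\<bar>" using t by auto
      then have "?c \<le> normal_density 0 t (x - y')" by (rule phi_anti[OF t])
      then show ?thesis using True by (simp add: ennreal_leI)
    qed simp
  qed
  moreover have "(\<integral>\<^sup>+ y'. ennreal ?c * indicator {y - t/2 .. y + t/2} y' \<partial>M) = ennreal (m t y * ?c)"
    by (subst nn_integral_cmult_indicator) (simp_all add: sets_M emeasure_eq_measure m_def ennreal_mult' mult.commute)
  ultimately have "ennreal (m t y * ?c) \<le> ennreal (p t x)" using pe_eq[OF t, of x] by simp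
  then show ?thesis using p_pos[OF t, of x] by (simp add: ennreal_le_iff)
qed

lemma mult_max0: assumes "0 < (a::real)" shows "a * max 0 c = max 0 (a * c)"
proof (cases "0 \<le> c")
  case True then show ?thesis using assms by simp
next
  case False then have "a * c < 0" using assms by (simp add: mult_pos_neg)
  then show ?thesis using False by simp
qed

lemma ennreal_plus3: "0 \<le> a \<Longrightarrow> 0 \<le> b \<Longrightarrow> 0 \<le> c \<Longrightarrow> ennreal (a + b + c) = ennreal a + ennreal b + ennreal c"
  by (simp add: ennreal_plus)

lemma ennreal_plus4: "0 \<le> a \<Longrightarrow> 0 \<le> b \<Longrightarrow> 0 \<le> c \<Longrightarrow> 0 \<le> d \<Longrightarrow>
  ennreal (a + b + c + d) = ennreal a + ennreal b + ennreal c + ennreal d"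
  by (simp add: ennreal_plus)

lemma L_pt_real: assumes t: "0 < t" "t < 1" and my: "0 < m t y"
  shows "max 0 (- ln (p t x)) + \<bar>ln t\<bar> \<le> - ln (m t y) + max 0 (ln (p t x)) + (3 + ((x - y) / t)\<^sup>2)"
proof -
  let ?d = "\<bar>x - y\<bar> + t/2"
  have php: "0 < normal_density 0 t ?d" by (rule normal_density_pos[OF t(1)])
  have "ln (m t y * normal_density 0 t ?d) \<le> ln (p t x)"
    using pe_lower[OF t(1), of y x] my php p_pos[OF t(1), of x] by (subst ln_le_cancel_iff) auto
  then have 1: "ln (m t y) + ln (normal_density 0 t ?d) \<le> ln (p t x)"
    using my php by (simp add: ln_mult)
  have 2: "ln (normal_density 0 t ?d) = - ln t - ln (sqrt (2 * pi)) - ?d\<^sup>2 / (2 * t\<^sup>2)"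
    by (rule ln_phi[OF t(1)])
  have "ln (sqrt (2 * pi)) \<le> sqrt (2 * pi) - 1" by (rule ln_le_minus_one) simp
  moreover have "sqrt (2 * pi) \<le> 3"
  proof -
    have "2 * pi \<le> 3\<^sup>2" using pi_less_4 by simp
    then show ?thesis by (simp add: real_sqrt_le_iff real_le_lsqrt)
  qed
  ultimately have 3: "ln (sqrt (2 * pi)) \<le> 2" by simp
  have "?d\<^sup>2 \<le> 2 * (x - y)\<^sup>2 + t\<^sup>2 / 2"
  proof -
    have "?d\<^sup>2 = (x - y)\<^sup>2 + \<bar>x - y\<bar> * t + t\<^sup>2 / 4"
      by (simp add: power2_eq_square algebra_simps)
    moreover have "\<bar>x - y\<bar> * t \<le> (x - y)\<^sup>2 + t\<^sup>2 / 4"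
      using sum_squares_ge_zero[of "\<bar>x - y\<bar> - t/2" 0]
      by (simp add: power2_eq_square algebra_simps)
    ultimately show ?thesis by simp
  qed
  then have "?d\<^sup>2 / (2 * t\<^sup>2) \<le> (2 * (x - y)\<^sup>2 + t\<^sup>2 / 2) / (2 * t\<^sup>2)"
    using t by (intro divide_right_mono) auto
  also have "\<dots> = ((x - y) / t)\<^sup>2 + 1/4"
    using t by (simp add: field_simps power2_eq_square)
  finally have 4: "?d\<^sup>2 / (2 * t\<^sup>2) \<le> ((x - y) / t)\<^sup>2 + 1/4" .
  have lt: "\<bar>ln t\<bar> = - ln t" using t by simp
  have "- ln (p t x) \<le> - ln (m t y) + ln t + 3 + ((x - y) / t)\<^sup>2"
    using 1 2 3 4 by linarith
  then show ?thesis unfolding lt by linarith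
qed

lemma L_total: assumes t: "0 < t" "t < 1"
  shows "NN t + ennreal \<bar>ln t\<bar> \<le> (\<integral>\<^sup>+ y. ennreal (- ln (m t y)) \<partial>M) + PP t + 4"
proof -
  have "NN t + ennreal \<bar>ln t\<bar> = J t (\<lambda>x y. ennreal (max 0 (- ln (p t x))) + ennreal \<bar>ln t\<bar>)"
  proof -
    have "J t (\<lambda>x y. ennreal (max 0 (- ln (p t x))) + ennreal \<bar>ln t\<bar>) =
      J t (\<lambda>x y. ennreal (max 0 (- ln (p t x)))) + J t (\<lambda>x y. ennreal \<bar>ln t\<bar>)"
      by (rule J_add) measurable
    also have "J t (\<lambda>x y. ennreal (max 0 (- ln (p t x)))) = (\<integral>\<^sup>+ x. pe t x * ennreal (max 0 (- ln (p t x))) \<partial>lborel)"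
      by (rule J_x[OF t(1)]) measurable
    also have "\<dots> = NN t" unfolding NN_def
    proof (rule nn_integral_cong)
      fix x
      have "p t x * max 0 (- ln (p t x)) = max 0 (- (p t x * ln (p t x)))"
        using mult_max0[OF p_pos[OF t(1)]] by simp
      moreover have "pe t x * ennreal (max 0 (- ln (p t x))) = ennreal (p t x * max 0 (- ln (p t x)))"
        unfolding pe_eq[OF t(1)] by (rule ennreal_mult'[symmetric]) (use p_pos[OF t(1), of x] in simp)
      ultimately show "pe t x * ennreal (max 0 (- ln (p t x))) = ennreal (max 0 (- (p t x * ln (p t x))))"
        by simp
    qed
    also have "J t (\<lambda>x y. ennreal \<bar>ln t\<bar>) = ennreal \<bar>ln t\<bar>" by (rule J_const[OF t(1)])
    finally show ?thesis by simp
  qed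
  also have "\<dots> \<le> J t (\<lambda>x y. (ennreal (- ln (m t y)) + ennreal (max 0 (ln (p t x)))) + ennreal (3 + ((x - y) / t)\<^sup>2))"
  proof (rule J_mono)
    show "AE y in M. \<forall>x. ennreal (max 0 (- ln (p t x))) + ennreal \<bar>ln t\<bar> \<le>
      (ennreal (- ln (m t y)) + ennreal (max 0 (ln (p t x)))) + ennreal (3 + ((x - y) / t)\<^sup>2)"
      using AE_m_pos[OF t(1)]
    proof eventually_elim
      case (elim y)
      have lm: "0 \<le> - ln (m t y)" using elim m_le1[of t y] by simp
      show ?case
      proof
        fix x
        have "ennreal (max 0 (- ln (p t x))) + ennreal \<bar>ln t\<bar> = ennreal (max 0 (- ln (p t x)) + \<bar>ln t\<bar>)"
          by (simp add: ennreal_plus)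
        also have "\<dots> \<le> ennreal (- ln (m t y) + max 0 (ln (p t x)) + (3 + ((x - y) / t)\<^sup>2))"
          by (rule ennreal_leI, rule L_pt_real[OF t elim])
        also have "\<dots> = (ennreal (- ln (m t y)) + ennreal (max 0 (ln (p t x)))) + ennreal (3 + ((x - y) / t)\<^sup>2)"
          by (rule ennreal_plus3) (use lm in auto)
        finally show "ennreal (max 0 (- ln (p t x))) + ennreal \<bar>ln t\<bar> \<le>
          (ennreal (- ln (m t y)) + ennreal (max 0 (ln (p t x)))) + ennreal (3 + ((x - y) / t)\<^sup>2)" .
      qed
    qed
  qed
  also have "\<dots> = J t (\<lambda>x y. ennreal (- ln (m t y))) + J t (\<lambda>x y. ennreal (max 0 (ln (p t x)))) + J t (\<lambda>x y. ennreal (3 + ((x - y) / t)\<^sup>2))"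
    by (subst J_add, measurable, subst J_add, measurable)
  also have "J t (\<lambda>x y. ennreal (- ln (m t y))) = (\<integral>\<^sup>+ y. ennreal (- ln (m t y)) \<partial>M)"
    by (rule J_y[OF t(1)])
  also have "J t (\<lambda>x y. ennreal (max 0 (ln (p t x)))) = PP t"
  proof -
    have "J t (\<lambda>x y. ennreal (max 0 (ln (p t x)))) = (\<integral>\<^sup>+ x. pe t x * ennreal (max 0 (ln (p t x))) \<partial>lborel)"
      by (rule J_x[OF t(1)]) measurable
    also have "\<dots> = PP t" unfolding PP_def
    proof (rule nn_integral_cong)
      fix x
      have "p t x * max 0 (ln (p t x)) = max 0 (p t x * ln (p t x))"
        using mult_max0[OF p_pos[OF t(1)]] by simp
      moreover have "pe t x * ennreal (max 0 (ln (p t x))) = ennreal (p t x * max 0 (ln (p t x)))"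
        unfolding pe_eq[OF t(1)] by (rule ennreal_mult'[symmetric]) (use p_pos[OF t(1), of x] in simp)
      ultimately show "pe t x * ennreal (max 0 (ln (p t x))) = ennreal (max 0 (p t x * ln (p t x)))"
        by simp
    qed
    finally show ?thesis .
  qed
  also have "J t (\<lambda>x y. ennreal (3 + ((x - y) / t)\<^sup>2)) = 4"
  proof -
    have "J t (\<lambda>x y. ennreal (3 + ((x - y) / t)\<^sup>2)) = (\<integral>\<^sup>+ u. ennreal (normal_density 0 t u) * ennreal (3 + (u / t)\<^sup>2) \<partial>lborel)"
      using J_diff[OF t(1), of "\<lambda>u. ennreal (3 + (u / t)\<^sup>2)"] by simp
    also have "\<dots> = (\<integral>\<^sup>+ u. ennreal (normal_density 0 t u) * 3 + ennreal (normal_density 0 t u) * ennreal ((u / t)\<^sup>2) \<partial>lborel)"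
      by (intro nn_integral_cong) (simp add: ennreal_plus distrib_left)
    also have "\<dots> = (\<integral>\<^sup>+ u. ennreal (normal_density 0 t u) * 3 \<partial>lborel) + (\<integral>\<^sup>+ u. ennreal (normal_density 0 t u) * ennreal ((u / t)\<^sup>2) \<partial>lborel)"
      by (rule nn_integral_add) measurable
    also have "\<dots> = 3 + 1"
      using moment2[OF t(1)] int_phi[OF t(1)] by (simp add: nn_integral_multc)
    finally show ?thesis by simp
  qed
  finally show ?thesis by (simp add: add.assoc)
qed

lemma PP_le: assumes t: "0 < t" "t < 1" shows "PP t \<le> ennreal \<bar>ln t\<bar>"
proof -
  have "PP t = J t (\<lambda>x y. ennreal (max 0 (ln (p t x))))"
  proof -
    have "J t (\<lambda>x y. ennreal (max 0 (ln (p t x)))) = (\<integral>\<^sup>+ x. pe t x * ennreal (max 0 (ln (p t x))) \<partial>lborel)"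
      by (rule J_x[OF t(1)]) measurable
    also have "\<dots> = PP t" unfolding PP_def
    proof (rule nn_integral_cong)
      fix x
      have "p t x * max 0 (ln (p t x)) = max 0 (p t x * ln (p t x))"
        using mult_max0[OF p_pos[OF t(1)]] by simp
      moreover have "pe t x * ennreal (max 0 (ln (p t x))) = ennreal (p t x * max 0 (ln (p t x)))"
        unfolding pe_eq[OF t(1)] by (rule ennreal_mult'[symmetric]) (use p_pos[OF t(1), of x] in simp)
      ultimately show "pe t x * ennreal (max 0 (ln (p t x))) = ennreal (max 0 (p t x * ln (p t x)))"
        by simp
    qed
    finally show ?thesis by simp
  qed
  also have "\<dots> \<le> J t (\<lambda>x y. ennreal \<bar>ln t\<bar>)"
  proof (rule J_mono, rule AE_I2, intro allI ennreal_leI)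
    fix x
    have "ln (p t x) \<le> ln (1 / t)"
      using p_le[OF t(1), of x] p_pos[OF t(1), of x] t by (subst ln_le_cancel_iff) auto
    then show "max 0 (ln (p t x)) \<le> \<bar>ln t\<bar>" using t by (simp add: ln_div)
  qed
  also have "\<dots> = ennreal \<bar>ln t\<bar>" by (rule J_const[OF t(1)])
  finally show ?thesis .
qed

lemma exp_abs_int: assumes t: "0 < t"
  shows "(\<integral>\<^sup>+ z. ennreal (exp (- \<bar>x - z\<bar> / t)) \<partial>lborel) \<le> ennreal (2 * t)"
proof -
  let ?ed = "\<lambda>u. ennreal (exponential_density (1 / t) u)"
  have ed1: "(\<integral>\<^sup>+ u. ?ed u \<partial>lborel) = 1"
    using prob_space.emeasure_space_1[OF prob_space_exponential_density[of "1/t"]] t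
    by (simp add: emeasure_density)
  have ed2: "(\<integral>\<^sup>+ u. ?ed (- u) \<partial>lborel) = 1"
    using nn_integral_real_affine[of ?ed "-1" 0] ed1 by simp
  have "(\<integral>\<^sup>+ z. ennreal (exp (- \<bar>x - z\<bar> / t)) \<partial>lborel) = (\<integral>\<^sup>+ u. ennreal (exp (- \<bar>u\<bar> / t)) \<partial>lborel)"
  proof -
    have "(\<integral>\<^sup>+ u. ennreal (exp (- \<bar>u\<bar> / t)) \<partial>lborel) = (\<integral>\<^sup>+ z. ennreal (exp (- \<bar>z - x\<bar> / t)) \<partial>lborel)"
      by (rule shift_lborel) measurable
    then show ?thesis by (simp add: abs_minus_commute)
  qed
  also have "\<dots> \<le> (\<integral>\<^sup>+ u. ennreal t * ?ed u + ennreal t * ?ed (- u) \<partial>lborel)"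
  proof (rule nn_integral_mono)
    fix u :: real
    have "exp (- \<bar>u\<bar> / t) \<le> t * exponential_density (1 / t) u + t * exponential_density (1 / t) (- u)"
      using t by (cases "u < 0"; cases "u = 0") (auto simp: exponential_density_def field_simps)
    then show "ennreal (exp (- \<bar>u\<bar> / t)) \<le> ennreal t * ?ed u + ennreal t * ?ed (- u)"
      using t by (simp add: ennreal_mult'[symmetric] ennreal_plus[symmetric] del: ennreal_plus ennreal_leI)
  qed
  also have "\<dots> = ennreal t * (\<integral>\<^sup>+ u. ?ed u \<partial>lborel) + ennreal t * (\<integral>\<^sup>+ u. ?ed (- u) \<partial>lborel)"
    by (subst nn_integral_add) (auto simp: nn_integral_cmult)
  also have "\<dots> = ennreal (2 * t)" using t by (simp add: ed1 ed2 ennreal_plus[symmetric] del: ennreal_plus)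
  finally show ?thesis .
qed

lemma inv_m_bound: assumes t: "0 < t"
  shows "inverse (ennreal (m t y)) \<le> ennreal (2 / t) * (\<integral>\<^sup>+ z. indicator {y - t/4 .. y + t/4} z * inverse (ennreal (m (t/2) z)) \<partial>lborel)"
proof -
  have "(\<integral>\<^sup>+ z. indicator {y - t/4 .. y + t/4} z * inverse (ennreal (m t y)) \<partial>lborel) \<le>
     (\<integral>\<^sup>+ z. indicator {y - t/4 .. y + t/4} z * inverse (ennreal (m (t/2) z)) \<partial>lborel)"
  proof (rule nn_integral_mono)
    fix z
    show "indicator {y - t/4 .. y + t/4} z * inverse (ennreal (m t y)) \<le> indicator {y - t/4 .. y + t/4} z * inverse (ennreal (m (t/2) z))"
    proof (cases "z \<in> {y - t/4 .. y + t/4}")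
      case True
      have "m (t/2) z \<le> m t y"
        unfolding m_def by (rule finite_measure_mono) (use True t in \<open>auto simp: sets_M\<close>)
      then have "inverse (ennreal (m t y)) \<le> inverse (ennreal (m (t/2) z))"
        using m_nonneg[of "t/2" z] by (cases "m (t/2) z = 0") (auto simp: inverse_ennreal ennreal_leI)
      then show ?thesis using True by simp
    qed simp
  qed
  moreover have "(\<integral>\<^sup>+ z. indicator {y - t/4 .. y + t/4} z * inverse (ennreal (m t y)) \<partial>lborel) =
      ennreal (t / 2) * inverse (ennreal (m t y))"
    using t by (simp add: nn_integral_multc)
  ultimately have "ennreal (2 / t) * (ennreal (t / 2) * inverse (ennreal (m t y))) \<le>
     ennreal (2 / t) * (\<integral>\<^sup>+ z. indicator {y - t/4 .. y + t/4} z * inverse (ennreal (m (t/2) z)) \<partial>lborel)"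
    by (simp add: mult_left_mono)
  moreover have "ennreal (2 / t) * (ennreal (t / 2) * inverse (ennreal (m t y))) = inverse (ennreal (m t y))"
    using t by (simp add: mult.assoc[symmetric] ennreal_mult'[symmetric])
  ultimately show ?thesis by simp
qed

definition V :: "real \<Rightarrow> real \<Rightarrow> ennreal" where
  "V t x = (\<integral>\<^sup>+ y. ennreal (exp (- \<bar>x - y\<bar> / t)) * inverse (ennreal (m t y)) \<partial>M)"

lemma inv_mul_le1: "inverse (ennreal a) * ennreal a \<le> 1"
  by (cases "a \<le> 0") (auto simp: ennreal_neg inverse_ennreal ennreal_mult'[symmetric])

lemma V_le: assumes t: "0 < t" shows "V t x \<le> 12"
proof -
  let ?I = "\<lambda>y z. (if \<bar>y - z\<bar> \<le> t/4 then 1 else 0 :: ennreal)"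
  let ?w = "\<lambda>z. inverse (ennreal (m (t/2) z))"
  have V1: "V t x \<le> (\<integral>\<^sup>+ y. ennreal (exp (- \<bar>x - y\<bar> / t)) * (ennreal (2 / t) * (\<integral>\<^sup>+ z. ?I y z * ?w z \<partial>lborel)) \<partial>M)"
    unfolding V_def
  proof (intro nn_integral_mono mult_left_mono)
    fix y
    have "indicator {y - t/4 .. y + t/4} = (\<lambda>z. ?I y z)"
      by (rule ext) (auto simp: indicator_def abs_le_iff field_simps split: abs_split)
    then show "inverse (ennreal (m t y)) \<le> ennreal (2 / t) * (\<integral>\<^sup>+ z. ?I y z * ?w z \<partial>lborel)"
      using inv_m_bound[OF t, of y] by simp
  qed simp
  also have "\<dots> = ennreal (2 / t) * (\<integral>\<^sup>+ y. \<integral>\<^sup>+ z. ennreal (exp (- \<bar>x - y\<bar> / t)) * (?I y z * ?w z) \<partial>lborel \<partial>M)"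
  proof -
    have "(\<integral>\<^sup>+ y. ennreal (exp (- \<bar>x - y\<bar> / t)) * (ennreal (2 / t) * (\<integral>\<^sup>+ z. ?I y z * ?w z \<partial>lborel)) \<partial>M) =
       (\<integral>\<^sup>+ y. ennreal (2 / t) * (\<integral>\<^sup>+ z. ennreal (exp (- \<bar>x - y\<bar> / t)) * (?I y z * ?w z) \<partial>lborel) \<partial>M)"
    proof (rule nn_integral_cong)
      fix y
      have "(\<integral>\<^sup>+ z. ennreal (exp (- \<bar>x - y\<bar> / t)) * (?I y z * ?w z) \<partial>lborel) =
         ennreal (exp (- \<bar>x - y\<bar> / t)) * (\<integral>\<^sup>+ z. ?I y z * ?w z \<partial>lborel)"
        by (rule nn_integral_cmult) measurable
      then show "ennreal (exp (- \<bar>x - y\<bar> / t)) * (ennreal (2 / t) * (\<integral>\<^sup>+ z. ?I y z * ?w z \<partial>lborel)) =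
         ennreal (2 / t) * (\<integral>\<^sup>+ z. ennreal (exp (- \<bar>x - y\<bar> / t)) * (?I y z * ?w z) \<partial>lborel)"
        by (simp add: ac_simps)
    qed
    also have "\<dots> = ennreal (2 / t) * (\<integral>\<^sup>+ y. \<integral>\<^sup>+ z. ennreal (exp (- \<bar>x - y\<bar> / t)) * (?I y z * ?w z) \<partial>lborel \<partial>M)"
      by (rule nn_integral_cmult) measurable
    finally show ?thesis .
  qed
  also have "\<dots> = ennreal (2 / t) * (\<integral>\<^sup>+ z. \<integral>\<^sup>+ y. ennreal (exp (- \<bar>x - y\<bar> / t)) * (?I y z * ?w z) \<partial>M \<partial>lborel)"
  proof -
    have "(\<integral>\<^sup>+ y. \<integral>\<^sup>+ z. ennreal (exp (- \<bar>x - y\<bar> / t)) * (?I y z * ?w z) \<partial>lborel \<partial>M) =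
      (\<integral>\<^sup>+ z. \<integral>\<^sup>+ y. ennreal (exp (- \<bar>x - y\<bar> / t)) * (?I y z * ?w z) \<partial>M \<partial>lborel)"
      by (rule tonelli[where f="\<lambda>z y. ennreal (exp (- \<bar>x - y\<bar> / t)) * (?I y z * ?w z)"]) measurable
    then show ?thesis by simp
  qed
  also have "\<dots> \<le> ennreal (2 / t) * (\<integral>\<^sup>+ z. ennreal 3 * ennreal (exp (- \<bar>x - z\<bar> / t)) \<partial>lborel)"
  proof (intro mult_left_mono nn_integral_mono)
    fix z
    have "(\<integral>\<^sup>+ y. ennreal (exp (- \<bar>x - y\<bar> / t)) * (?I y z * ?w z) \<partial>M) \<le>
        (\<integral>\<^sup>+ y. (ennreal 3 * ennreal (exp (- \<bar>x - z\<bar> / t)) * ?w z) * indicator {z - t/4 .. z + t/4} y \<partial>M)"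
    proof (rule nn_integral_mono)
      fix y
      show "ennreal (exp (- \<bar>x - y\<bar> / t)) * (?I y z * ?w z) \<le>
        (ennreal 3 * ennreal (exp (- \<bar>x - z\<bar> / t)) * ?w z) * indicator {z - t/4 .. z + t/4} y"
      proof (cases "\<bar>y - z\<bar> \<le> t/4")
        case True
        have "- \<bar>x - y\<bar> / t \<le> 1 + - \<bar>x - z\<bar> / t"
        proof -
          have "\<bar>x - z\<bar> \<le> \<bar>x - y\<bar> + t" using True t by linarith
          then have "\<bar>x - z\<bar> / t \<le> (\<bar>x - y\<bar> + t) / t" using t by (simp add: divide_right_mono)
          then show ?thesis using t by (simp add: add_divide_distrib)
        qed
        then have "exp (- \<bar>x - y\<bar> / t) \<le> exp 1 * exp (- \<bar>x - z\<bar> / t)"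
          by (simp add: exp_add[symmetric])
        also have "\<dots> \<le> 3 * exp (- \<bar>x - z\<bar> / t)" using exp_le by simp
        finally have "ennreal (exp (- \<bar>x - y\<bar> / t)) \<le> ennreal (3 * exp (- \<bar>x - z\<bar> / t))"
          by (rule ennreal_leI)
        moreover have "ennreal (3 * exp (- \<bar>x - z\<bar> / t)) = ennreal 3 * ennreal (exp (- \<bar>x - z\<bar> / t))"
          by (rule ennreal_mult') simp
        ultimately have "ennreal (exp (- \<bar>x - y\<bar> / t)) \<le> ennreal 3 * ennreal (exp (- \<bar>x - z\<bar> / t))"
          by (simp only:)
        moreover have "y \<in> {z - t/4 .. z + t/4}" using True unfolding atLeastAtMost_iff by arith
        ultimately show ?thesis using True by (simp add: mult_right_mono)
      qed simp
    qed
    also have "\<dots> = (ennreal 3 * ennreal (exp (- \<bar>x - z\<bar> / t))) * (?w z * emeasure M {z - t/4 .. z + t/4})"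
      by (subst nn_integral_cmult_indicator) (simp_all add: sets_M mult.assoc)
    also have "?w z * emeasure M {z - t/4 .. z + t/4} \<le> 1"
    proof -
      have "emeasure M {z - t/4 .. z + t/4} = ennreal (m (t/2) z)"
        by (simp add: m_def emeasure_eq_measure sets_M)
      then show ?thesis using inv_mul_le1 by simp
    qed
    then have "(ennreal 3 * ennreal (exp (- \<bar>x - z\<bar> / t))) * (?w z * emeasure M {z - t/4 .. z + t/4}) \<le>
        ennreal 3 * ennreal (exp (- \<bar>x - z\<bar> / t)) * 1"
      by (rule mult_left_mono) simp
    finally show "(\<integral>\<^sup>+ y. ennreal (exp (- \<bar>x - y\<bar> / t)) * (?I y z * ?w z) \<partial>M) \<le> ennreal 3 * ennreal (exp (- \<bar>x - z\<bar> / t))"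
      by simp
  qed simp
  also have "\<dots> = ennreal (2 / t) * (ennreal 3 * (\<integral>\<^sup>+ z. ennreal (exp (- \<bar>x - z\<bar> / t)) \<partial>lborel))"
  proof -
    have mz: "(\<lambda>z. ennreal (exp (- \<bar>x - z\<bar> / t))) \<in> borel_measurable lborel" by measurable
    show ?thesis using nn_integral_cmult[OF mz, of "ennreal 3"] by simp
  qed
  also have "\<dots> \<le> ennreal (2 / t) * (ennreal 3 * ennreal (2 * t))"
    by (intro mult_left_mono exp_abs_int[OF t]) simp_all
  also have "\<dots> = 12"
  proof -
    have e1: "ennreal ((2/t) * (3 * (2*t))) = ennreal (2/t) * ennreal (3 * (2*t))"
      by (rule ennreal_mult') (use t in simp)
    have e2: "ennreal (3 * (2*t)) = ennreal 3 * ennreal (2*t)" by (rule ennreal_mult') simp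
    have e3: "(2/t) * (3 * (2*t)) = 12" using t by simp
    have "ennreal (2/t) * (ennreal 3 * ennreal (2*t)) = ennreal 12"
      using e1 e2 e3 by metis
    then show ?thesis by simp
  qed
  finally show ?thesis .
qed

definition R :: "real \<Rightarrow> real \<Rightarrow> real \<Rightarrow> ennreal" where
  "R t x y = ennreal (p t x * exp (- \<bar>x - y\<bar> / t) / normal_density 0 t (x - y)) * inverse (ennreal (m t y))"

lemma R_measurable[measurable]: "case_prod (R t) \<in> borel_measurable (borel \<Otimes>\<^sub>M borel)"
  unfolding R_def[abs_def] by measurable

lemma abs_le_1_sq: "\<bar>v::real\<bar> \<le> 1 + v\<^sup>2"
proof (cases "\<bar>v\<bar> \<le> 1")
  case True then show ?thesis by (simp add: add_increasing2)
next
  case False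
  then have "\<bar>v\<bar> * 1 \<le> \<bar>v\<bar> * \<bar>v\<bar>" by (intro mult_left_mono) auto
  then show ?thesis by (simp add: power2_eq_square abs_mult_self_eq)
qed

lemma U_pt: assumes t: "0 < t" "t < 1"
  shows "ennreal (max 0 (ln (p t x))) + ennreal (- ln (m t y)) \<le>
    ennreal (max 0 (- ln (p t x))) + ennreal \<bar>ln t\<bar> + ennreal (1 + ((x - y) / t)\<^sup>2) + R t x y"
proof (cases "m t y = 0")
  case True
  have pos: "0 < p t x * exp (- \<bar>x - y\<bar> / t) / normal_density 0 t (x - y)"
    using p_pos[OF t(1), of x] normal_density_pos[OF t(1), of 0 "x - y"] by simp
  have "R t x y = \<top>" unfolding R_def True
    using pos p_pos[OF t(1), of x] normal_density_pos[OF t(1), of 0 "x - y"] by (simp add: ennreal_mult_top)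
  then show ?thesis by simp
next
  case False
  then have my: "0 < m t y" using m_nonneg[of t y] by linarith
  let ?ph = "normal_density 0 t (x - y)"
  let ?k = "exp (- \<bar>x - y\<bar> / t)"
  let ?c = "p t x * ?k / ?ph"
  have php: "0 < ?ph" by (rule normal_density_pos[OF t(1)])
  have pp: "0 < p t x" by (rule p_pos[OF t(1)])
  have cpos: "0 < ?c" using php pp by simp
  have Rpos: "0 < ?c / m t y" using cpos my by (rule divide_pos_pos)
  have "ln (?c / m t y) \<le> ?c / m t y - 1" by (rule ln_le_minus_one[OF Rpos])
  moreover have "ln (?c / m t y) = ln (p t x) - \<bar>x - y\<bar> / t - ln ?ph - ln (m t y)"
    using php pp my by (simp add: ln_div ln_mult)
  moreover have "ln ?ph \<le> - ln t"
  proof -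
    have "ln ?ph \<le> ln (1 / t)" using phi_le'[OF t(1), of "x - y"] php t by (subst ln_le_cancel_iff) auto
    then show ?thesis using t by (simp add: ln_div)
  qed
  moreover have "\<bar>x - y\<bar> / t \<le> 1 + ((x - y) / t)\<^sup>2"
    using abs_le_1_sq[of "(x - y) / t"] t by simp
  ultimately have ineq: "max 0 (ln (p t x)) + (- ln (m t y)) \<le>
      max 0 (- ln (p t x)) + \<bar>ln t\<bar> + (1 + ((x - y) / t)\<^sup>2) + ?c / m t y"
    using t by auto
  have lm: "0 \<le> - ln (m t y)" using my m_le1[of t y] by simp
  have "ennreal (max 0 (ln (p t x))) + ennreal (- ln (m t y)) = ennreal (max 0 (ln (p t x)) + (- ln (m t y)))"
    by (rule ennreal_plus[symmetric]) (use lm in auto)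
  also have "\<dots> \<le> ennreal (max 0 (- ln (p t x)) + \<bar>ln t\<bar> + (1 + ((x - y) / t)\<^sup>2) + ?c / m t y)"
    by (rule ennreal_leI[OF ineq])
  also have "\<dots> = ennreal (max 0 (- ln (p t x))) + ennreal \<bar>ln t\<bar> + ennreal (1 + ((x - y) / t)\<^sup>2) + ennreal (?c / m t y)"
    by (rule ennreal_plus4) (use Rpos in auto)
  also have "ennreal (?c / m t y) = R t x y"
    unfolding R_def using my cpos
    by (simp add: inverse_ennreal ennreal_mult'[symmetric] divide_inverse)
  finally show ?thesis .
qed

lemma JR_le: assumes t: "0 < t" shows "J t (R t) \<le> 12"
proof -
  have "J t (R t) = (\<integral>\<^sup>+ y. \<integral>\<^sup>+ x. ennreal (p t x) * (ennreal (exp (- \<bar>x - y\<bar> / t)) * inverse (ennreal (m t y))) \<partial>lborel \<partial>M)"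
    unfolding J_def
  proof (intro nn_integral_cong)
    fix x y
    have php: "0 < normal_density 0 t (x - y)" by (rule normal_density_pos[OF t])
    have "ennreal (normal_density 0 t (x - y)) * ennreal (p t x * exp (- \<bar>x - y\<bar> / t) / normal_density 0 t (x - y)) =
        ennreal (p t x) * ennreal (exp (- \<bar>x - y\<bar> / t))"
      using php p_pos[OF t, of x] by (simp add: ennreal_mult'[symmetric])
    then show "ennreal (normal_density 0 t (x - y)) * R t x y =
        ennreal (p t x) * (ennreal (exp (- \<bar>x - y\<bar> / t)) * inverse (ennreal (m t y)))"
      unfolding R_def by (simp add: mult.assoc[symmetric])
  qed
  also have "\<dots> = (\<integral>\<^sup>+ x. \<integral>\<^sup>+ y. ennreal (p t x) * (ennreal (exp (- \<bar>x - y\<bar> / t)) * inverse (ennreal (m t y))) \<partial>M \<partial>lborel)"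
    by (rule tonelli[where f="\<lambda>x y. ennreal (p t x) * (ennreal (exp (- \<bar>x - y\<bar> / t)) * inverse (ennreal (m t y)))"]) measurable
  also have "\<dots> = (\<integral>\<^sup>+ x. ennreal (p t x) * V t x \<partial>lborel)"
    unfolding V_def by (intro nn_integral_cong nn_integral_cmult) measurable
  also have "\<dots> \<le> (\<integral>\<^sup>+ x. ennreal (p t x) * 12 \<partial>lborel)"
    by (intro nn_integral_mono mult_left_mono V_le[OF t]) simp
  also have "\<dots> = (\<integral>\<^sup>+ x. ennreal (p t x) \<partial>lborel) * 12"
    by (rule nn_integral_multc) measurable
  also have "\<dots> = 12"
  proof -
    have pe_fun: "pe t = (\<lambda>x. ennreal (p t x))" using pe_eq[OF t] by auto
    have "(\<integral>\<^sup>+ x. ennreal (p t x) \<partial>lborel) = 1" using int_pe[OF t] unfolding pe_fun .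
    then show ?thesis by simp
  qed
  finally show ?thesis .
qed

lemma J_Lp: assumes t: "0 < t" shows "J t (\<lambda>x y. ennreal (max 0 (ln (p t x)))) = PP t"
proof -
  have "J t (\<lambda>x y. ennreal (max 0 (ln (p t x)))) = (\<integral>\<^sup>+ x. pe t x * ennreal (max 0 (ln (p t x))) \<partial>lborel)"
    by (rule J_x[OF t]) measurable
  also have "\<dots> = PP t" unfolding PP_def
  proof (rule nn_integral_cong)
    fix x
    have "p t x * max 0 (ln (p t x)) = max 0 (p t x * ln (p t x))"
      using mult_max0[OF p_pos[OF t]] by simp
    moreover have "pe t x * ennreal (max 0 (ln (p t x))) = ennreal (p t x * max 0 (ln (p t x)))"
      unfolding pe_eq[OF t] by (rule ennreal_mult'[symmetric]) (use p_pos[OF t, of x] in simp)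
    ultimately show "pe t x * ennreal (max 0 (ln (p t x))) = ennreal (max 0 (p t x * ln (p t x)))"
      by simp
  qed
  finally show ?thesis .
qed

lemma J_Lm: assumes t: "0 < t" shows "J t (\<lambda>x y. ennreal (max 0 (- ln (p t x)))) = NN t"
proof -
  have "J t (\<lambda>x y. ennreal (max 0 (- ln (p t x)))) = (\<integral>\<^sup>+ x. pe t x * ennreal (max 0 (- ln (p t x))) \<partial>lborel)"
    by (rule J_x[OF t]) measurable
  also have "\<dots> = NN t" unfolding NN_def
  proof (rule nn_integral_cong)
    fix x
    have "p t x * max 0 (- ln (p t x)) = max 0 (- (p t x * ln (p t x)))"
      using mult_max0[OF p_pos[OF t]] by simp
    moreover have "pe t x * ennreal (max 0 (- ln (p t x))) = ennreal (p t x * max 0 (- ln (p t x)))"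
      unfolding pe_eq[OF t] by (rule ennreal_mult'[symmetric]) (use p_pos[OF t, of x] in simp)
    ultimately show "pe t x * ennreal (max 0 (- ln (p t x))) = ennreal (max 0 (- (p t x * ln (p t x))))"
      by simp
  qed
  finally show ?thesis .
qed

lemma J_q: assumes t: "0 < t" and c: "0 \<le> c" shows "J t (\<lambda>x y. ennreal (c + ((x - y) / t)\<^sup>2)) = ennreal c + 1"
proof -
  have "J t (\<lambda>x y. ennreal (c + ((x - y) / t)\<^sup>2)) = (\<integral>\<^sup>+ u. ennreal (normal_density 0 t u) * ennreal (c + (u / t)\<^sup>2) \<partial>lborel)"
    using J_diff[OF t, of "\<lambda>u. ennreal (c + (u / t)\<^sup>2)"] by simp
  also have "\<dots> = (\<integral>\<^sup>+ u. ennreal (normal_density 0 t u) * ennreal c + ennreal (normal_density 0 t u) * ennreal ((u / t)\<^sup>2) \<partial>lborel)"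
    by (intro nn_integral_cong) (simp add: ennreal_plus c distrib_left)
  also have "\<dots> = (\<integral>\<^sup>+ u. ennreal (normal_density 0 t u) * ennreal c \<partial>lborel) + (\<integral>\<^sup>+ u. ennreal (normal_density 0 t u) * ennreal ((u / t)\<^sup>2) \<partial>lborel)"
    by (rule nn_integral_add) measurable
  also have "\<dots> = ennreal c + 1"
    using moment2[OF t] int_phi[OF t] by (simp add: nn_integral_multc)
  finally show ?thesis .
qed

lemma U_total: assumes t: "0 < t" "t < 1"
  shows "PP t + (\<integral>\<^sup>+ y. ennreal (- ln (m t y)) \<partial>M) \<le> NN t + ennreal \<bar>ln t\<bar> + 14"
proof -
  have "PP t + (\<integral>\<^sup>+ y. ennreal (- ln (m t y)) \<partial>M) =
      J t (\<lambda>x y. ennreal (max 0 (ln (p t x)))) + J t (\<lambda>x y. ennreal (- ln (m t y)))"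
    unfolding J_Lp[OF t(1)] J_y[OF t(1)] ..
  also have "\<dots> = J t (\<lambda>x y. ennreal (max 0 (ln (p t x))) + ennreal (- ln (m t y)))"
    by (rule J_add[symmetric]) measurable
  also have "\<dots> \<le> J t (\<lambda>x y. ennreal (max 0 (- ln (p t x))) + ennreal \<bar>ln t\<bar> + ennreal (1 + ((x - y) / t)\<^sup>2) + R t x y)"
    by (rule J_mono, rule AE_I2, intro allI U_pt[OF t])
  also have "\<dots> = J t (\<lambda>x y. ennreal (max 0 (- ln (p t x)))) + J t (\<lambda>x y. ennreal \<bar>ln t\<bar>) +
      J t (\<lambda>x y. ennreal (1 + ((x - y) / t)\<^sup>2)) + J t (R t)"
  proof -
    have 1: "J t (\<lambda>x y. ennreal (max 0 (- ln (p t x))) + ennreal \<bar>ln t\<bar> + ennreal (1 + ((x - y) / t)\<^sup>2) + R t x y) =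
      J t (\<lambda>x y. ennreal (max 0 (- ln (p t x))) + ennreal \<bar>ln t\<bar> + ennreal (1 + ((x - y) / t)\<^sup>2)) + J t (R t)"
      by (rule J_add[where g="R t"]) measurable
    have 2: "J t (\<lambda>x y. ennreal (max 0 (- ln (p t x))) + ennreal \<bar>ln t\<bar> + ennreal (1 + ((x - y) / t)\<^sup>2)) =
      J t (\<lambda>x y. ennreal (max 0 (- ln (p t x))) + ennreal \<bar>ln t\<bar>) + J t (\<lambda>x y. ennreal (1 + ((x - y) / t)\<^sup>2))"
      by (rule J_add[where f="\<lambda>x y. ennreal (max 0 (- ln (p t x))) + ennreal \<bar>ln t\<bar>"
            and g="\<lambda>x y. ennreal (1 + ((x - y) / t)\<^sup>2)"]) measurable
    have 3: "J t (\<lambda>x y. ennreal (max 0 (- ln (p t x))) + ennreal \<bar>ln t\<bar>) =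
      J t (\<lambda>x y. ennreal (max 0 (- ln (p t x)))) + J t (\<lambda>x y. ennreal \<bar>ln t\<bar>)"
      by (rule J_add[where f="\<lambda>x y. ennreal (max 0 (- ln (p t x)))" and g="\<lambda>x y. ennreal \<bar>ln t\<bar>"]) measurable
    show ?thesis unfolding 1 2 3 ..
  qed
  also have "\<dots> = NN t + ennreal \<bar>ln t\<bar> + 2 + J t (R t)"
  proof -
    have "J t (\<lambda>x y. ennreal (1 + ((x - y) / t)\<^sup>2)) = ennreal 1 + 1" by (rule J_q[OF t(1)]) simp
    then have q: "J t (\<lambda>x y. ennreal (1 + ((x - y) / t)\<^sup>2)) = 2" by simp
    show ?thesis unfolding q J_Lm[OF t(1)] J_const[OF t(1)] ..
  qed
  also have "\<dots> \<le> NN t + ennreal \<bar>ln t\<bar> + 2 + 12"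
    by (intro add_left_mono JR_le[OF t(1)])
  also have "\<dots> = NN t + ennreal \<bar>ln t\<bar> + 14"
    by (simp only: add.assoc) simp
  finally show ?thesis .
qed

end

lemma tend14: "((\<lambda>t::real. 14 / \<bar>ln t\<bar>) \<longlongrightarrow> 0) (at_right 0)"
proof -
  have "((\<lambda>t::real. 14 / (- ln t)) \<longlongrightarrow> 0) (at_right 0)" by real_asymp
  moreover have "eventually (\<lambda>t::real. 14 / (- ln t) = 14 / \<bar>ln t\<bar>) (at_right 0)"
    by (rule eventually_mono[OF eventually_at_right_real[of 0 1]]) auto
  ultimately show ?thesis by (rule Lim_transform_eventually)
qed

theorem theorem3p1:
  fixes \<mu> :: "real measure"
  assumes "prob_space \<mu>" and "sets \<mu> = sets borel"
  shows "classical_entropy_dim \<mu> =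
    Limsup (at_right 0) (\<lambda>t. enn2ereal (\<integral>\<^sup>+ y. ennreal (local_dim_t \<mu> t y) \<partial>\<mu>))"
proof -
  interpret ED \<mu> by (intro ED.intro ED_axioms.intro assms)
  let ?F = "at_right (0::real)"
  define g where "g t = entropy_meas (smoothed \<mu> t) / ereal \<bar>ln t\<bar>" for t
  define f where "f t = enn2ereal (\<integral>\<^sup>+ y. ennreal (local_dim_t \<mu> t y) \<partial>\<mu>)" for t
  define A where "A t = (\<integral>\<^sup>+ y. ennreal (- ln (m t y)) \<partial>\<mu>)" for t
  have F: "?F \<noteq> bot" by simp
  have ev01: "eventually (\<lambda>t. 0 < t \<and> t < 1) ?F"
    by (rule eventually_mono[OF eventually_at_right_real[of 0 1]]) auto
  have key: "eventually (\<lambda>t. 1 - g t \<le> f t + ereal (14 / \<bar>ln t\<bar>) \<and> f t \<le> (1 - g t) + ereal (14 / \<bar>ln t\<bar>)) ?F"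
    using ev01
  proof eventually_elim
    case (elim t)
    then have t: "0 < t" "t < 1" by auto
    have a: "0 < \<bar>ln t\<bar>" using t by simp
    have hg: "g t = (enn2ereal (PP t) - enn2ereal (NN t)) / ereal \<bar>ln t\<bar>"
      unfolding g_def entropy_eq[OF t(1)] ..
    have hf: "f t = enn2ereal (A t / ennreal \<bar>ln t\<bar>)"
    proof -
      have "(\<integral>\<^sup>+ y. ennreal (local_dim_t \<mu> t y) \<partial>\<mu>) = (\<integral>\<^sup>+ y. ennreal (- ln (m t y)) / ennreal \<bar>ln t\<bar> \<partial>\<mu>)"
      proof (rule nn_integral_cong)
        fix y
        have "0 \<le> - ln (m t y)"
          using m_nonneg[of t y] m_le1[of t y] by (cases "m t y = 0") auto
        then show "ennreal (local_dim_t \<mu> t y) = ennreal (- ln (m t y)) / ennreal \<bar>ln t\<bar>"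
          unfolding local_dim_t_def m_def using a by (simp add: divide_ennreal)
      qed
      also have "\<dots> = A t / ennreal \<bar>ln t\<bar>"
        unfolding A_def by (rule nn_integral_divide) measurable
      finally show ?thesis unfolding f_def by simp
    qed
    have Pfin: "PP t < \<infinity>" using PP_le[OF t] by (simp add: le_less_trans)
    note cp = close_pt[OF a Pfin L_total[OF t, folded A_def] U_total[OF t, folded A_def]]
    show ?case unfolding hg hf using cp by simp
  qed
  have e: "((\<lambda>t::real. 14 / \<bar>ln t\<bar>) \<longlongrightarrow> 0) ?F" by (rule tend14)
  have le1: "Limsup ?F (\<lambda>t. 1 - g t) \<le> Limsup ?F f"
    by (rule limsup_close[OF e F]) (use key in \<open>eventually_elim, simp\<close>)
  have le2: "Limsup ?F f \<le> Limsup ?F (\<lambda>t. 1 - g t)"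
    by (rule limsup_close[OF e F]) (use key in \<open>eventually_elim, simp\<close>)
  have "classical_entropy_dim \<mu> = 1 - Liminf ?F g"
    unfolding classical_entropy_dim_def g_def ..
  also have "\<dots> = Limsup ?F (\<lambda>t. 1 - g t)"
  proof -
    have "Limsup ?F (\<lambda>t. 1 - g t) = Limsup ?F (\<lambda>t. 1 + (- g t))"
      by (simp add: minus_ereal_def)
    also have "\<dots> = 1 + Limsup ?F (\<lambda>t. - g t)"
      by (rule Limsup_add_ereal_left[OF F]) simp
    also have "\<dots> = 1 - Liminf ?F g"
      by (simp add: ereal_Limsup_uminus minus_ereal_def)
    finally show ?thesis ..
  qed
  also have "\<dots> = Limsup ?F f" using le1 le2 by (rule antisym)
  finally show ?thesis unfolding f_def .
qed

end
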